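(* Every partition $F\subseteq S^d$ that is a $k$-neighborly family for some $k\leqslant 2$ is a total lamination.
   Context: Let $S=\{0,1,\ast\}$ and let $S^d$ be the set of strings of length $d$ over $S$; the symbol $\ast$ is called a joker, and $j(x)$ denotes the number of jokers in $x\in S^d$. For $x,y\in S^d$, $d(x,y)$ is the number of positions $i\in[d]$ such that one of $x_i,y_i$ equals $0$ and the other equals $1$. A family $F\subseteq S^d$ is $k$-neighborly if $1\leqslant d(x,y)\leqslant k$ for all distinct $x,y\in F$. A $k$-neighborly family $F$ is a partition if $\sum_{x\in F}2^{j(x)}=2^d$. For $s\in S$ and $i\in[d]$, $F^{i,s}$ denotes the set of strings in $F$ having symbol $s$ at position $i$. A family $F\subseteq S^d$ is a lamination if it is a partition and $F=F^{i,0}\cup F^{i,1}$ for some $i\in[d]$. For $v\in S^d$ and $i\in[d]$, $v_{-i}$ is the string of length $d-1$ obtained by deleting the $i$-th letter of $v$, and $F_{-i}=\{v_{-i}:v\in F\}$. Total laminations are defined recursively on $d$: for every $d\geqslant 1$, the one-element family $\{\ast\ast\cdots\ast\}\subseteq S^d$ and the full cube $\{0,1\}^d\subseteq S^d$ are total laminations; and a lamination $F\subseteq S^d$ is a total lamination if there is $i\in[d]$ with $F=F^{i,0}\cup F^{i,1}$ such that both $(F^{i,0})_{-i}$ and $(F^{i,1})_{-i}$ are total laminations (in $S^{d-1}$). *)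

theory Defs
  imports Main
begin

text \<open>Alphabet S = {0,1,*}; strings of length d are lists of length d.
  Positions are 0-based: i < d corresponds to i+1 in [d].\<close>

datatype sym = Zero | One | Joker

definition strings :: "nat \<Rightarrow> sym list set" where
  "strings d = {x. length x = d}"

definition jokers :: "sym list \<Rightarrow> nat" where
  "jokers x = length (filter (\<lambda>s. s = Joker) x)"

definition sdist :: "sym list \<Rightarrow> sym list \<Rightarrow> nat" where
  "sdist x y = card {i. i < length x \<and> i < length y \<and>
      ((x ! i = Zero \<and> y ! i = One) \<or> (x ! i = One \<and> y ! i = Zero))}"

definition neighborly :: "nat \<Rightarrow> sym list set \<Rightarrow> bool" where
  "neighborly k F \<longleftrightarrow> (\<forall>x\<in>F. \<forall>y\<in>F. x \<noteq> y \<longrightarrow> 1 \<le> sdist x y \<and> sdist x y \<le> k)"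

definition is_partition :: "nat \<Rightarrow> sym list set \<Rightarrow> bool" where
  "is_partition d F \<longleftrightarrow> F \<subseteq> strings d \<and> (\<exists>k. neighborly k F) \<and>
      (\<Sum>x\<in>F. (2::nat) ^ jokers x) = 2 ^ d"

definition fam_at :: "sym list set \<Rightarrow> nat \<Rightarrow> sym \<Rightarrow> sym list set" where
  "fam_at F i s = {x\<in>F. x ! i = s}"

definition del_at :: "nat \<Rightarrow> sym list \<Rightarrow> sym list" where
  "del_at i v = take i v @ drop (Suc i) v"

definition del_fam :: "nat \<Rightarrow> sym list set \<Rightarrow> sym list set" where
  "del_fam i F = del_at i ` F"

definition is_lamination :: "nat \<Rightarrow> sym list set \<Rightarrow> bool" where
  "is_lamination d F \<longleftrightarrow> is_partition d F \<and>
      (\<exists>i<d. F = fam_at F i Zero \<union> fam_at F i One)"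

inductive total_lamination :: "nat \<Rightarrow> sym list set \<Rightarrow> bool" where
  all_joker: "d \<ge> 1 \<Longrightarrow> total_lamination d {replicate d Joker}"
| full_cube: "d \<ge> 1 \<Longrightarrow> total_lamination d {x. length x = d \<and> set x \<subseteq> {Zero, One}}"
| split: "\<lbrakk>is_lamination d F; i < d; F = fam_at F i Zero \<union> fam_at F i One;
           total_lamination (d - 1) (del_fam i (fam_at F i Zero));
           total_lamination (d - 1) (del_fam i (fam_at F i One))\<rbrakk>
          \<Longrightarrow> total_lamination d F"

end

theory Submission
  imports Defs
begin

lemma UNIV_sym: "(UNIV :: sym set) = {Zero, One, Joker}"
  by (auto intro: sym.exhaust)

lemma finite_strings: "finite (strings d)"
proof -
  have "strings d = {xs. set xs \<subseteq> UNIV \<and> length xs = d}" by (auto simp: strings_def)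
  moreover have "finite {xs :: sym list. set xs \<subseteq> UNIV \<and> length xs = d}"
    by (rule finite_lists_length_eq) (simp add: UNIV_sym)
  ultimately show ?thesis by simp
qed

definition mem :: "sym \<Rightarrow> sym \<Rightarrow> bool" where
  "mem a b \<longleftrightarrow> b \<noteq> Joker \<and> (a \<noteq> Joker \<longrightarrow> b = a)"

definition cube :: "sym list \<Rightarrow> sym list set" where
  "cube x = {p. list_all2 mem x p}"

definition pts :: "nat \<Rightarrow> sym list set" where
  "pts d = {p. length p = d \<and> Joker \<notin> set p}"

definition good :: "nat \<Rightarrow> sym list set \<Rightarrow> bool" where
  "good d F \<longleftrightarrow> F \<subseteq> strings d \<and> neighborly 2 F \<and> pts d \<subseteq> \<Union>(cube ` F)"

fun neg :: "sym \<Rightarrow> sym" where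
  "neg Zero = One" | "neg One = Zero" | "neg Joker = Joker"

definition conf :: "sym \<Rightarrow> sym \<Rightarrow> bool" where
  "conf a b \<longleftrightarrow> (a = Zero \<and> b = One) \<or> (a = One \<and> b = Zero)"

definition fl :: "nat set \<Rightarrow> sym list \<Rightarrow> sym list" where
  "fl S x = map (\<lambda>i. if i \<in> S then neg (x!i) else x!i) [0..<length x]"

lemma fl_length[simp]: "length (fl S x) = length x" by (simp add: fl_def)
lemma fl_nth[simp]: "i < length x \<Longrightarrow> fl S x ! i = (if i \<in> S then neg (x!i) else x!i)"
  by (simp add: fl_def)

lemma neg_neq[simp]: "v \<noteq> Joker \<Longrightarrow> neg v \<noteq> v" by (cases v) auto
lemma neg_J[simp]: "(neg v = Joker) = (v = Joker)" by (cases v) auto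
lemma neg_neg[simp]: "neg (neg v) = v" by (cases v) auto

lemma cube_nth: "p \<in> cube x \<longleftrightarrow> length p = length x \<and>
   (\<forall>i<length x. p!i \<noteq> Joker \<and> (x!i \<noteq> Joker \<longrightarrow> p!i = x!i))"
  by (auto simp: cube_def list_all2_conv_all_nth mem_def)

lemma pts_nth: "p \<in> pts d \<longleftrightarrow> length p = d \<and> (\<forall>i<d. p!i \<noteq> Joker)"
  by (auto simp: pts_def in_set_conv_nth)

lemma sdist_conf: "sdist x y = card {i. i < length x \<and> i < length y \<and> conf (x!i) (y!i)}"
  by (simp add: sdist_def conf_def)

lemma conf_cases: "conf a b \<Longrightarrow> a \<noteq> Joker \<and> b \<noteq> Joker \<and> b = neg a"
  by (auto simp: conf_def)

lemma conf_neg: "a \<noteq> Joker \<Longrightarrow> conf a (neg a)" by (cases a) (auto simp: conf_def)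
lemma conf_neg2: "a \<noteq> Joker \<Longrightarrow> conf (neg a) a" by (cases a) (auto simp: conf_def)

lemma common_pt_sdist0:
  assumes "p \<in> cube x" "p \<in> cube y"
  shows "sdist x y = 0"
proof -
  have "{i. i < length x \<and> i < length y \<and> conf (x!i) (y!i)} = {}"
    using assms by (auto simp: cube_nth conf_def)
  thus ?thesis by (simp add: sdist_conf)
qed

lemma good_uniq:
  assumes "good d F" "x \<in> F" "y \<in> F" "p \<in> cube x" "p \<in> cube y"
  shows "x = y"
proof (rule ccontr)
  assume "x \<noteq> y"
  then have "1 \<le> sdist x y" using assms by (auto simp: good_def neighborly_def)
  then show False using common_pt_sdist0[OF assms(4,5)] by simp
qed

lemma good_cover:
  assumes "good d F" "p \<in> pts d"
  obtains x where "x \<in> F" "p \<in> cube x"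
  using assms by (auto simp: good_def)

lemma good_len: "good d F \<Longrightarrow> x \<in> F \<Longrightarrow> length x = d"
  by (auto simp: good_def strings_def)

lemma good_finite: "good d F \<Longrightarrow> finite F"
  using finite_strings by (auto simp: good_def intro: finite_subset)

lemma good_nb: "good d F \<Longrightarrow> x \<in> F \<Longrightarrow> y \<in> F \<Longrightarrow> x \<noteq> y \<Longrightarrow> sdist x y \<le> 2"
  by (auto simp: good_def neighborly_def)

lemma cube_Nil: "cube [] = {[]}" by (auto simp: cube_def)

lemma cube_Cons: "cube (a # x) = (\<lambda>(b,p). b # p) ` ({b. mem a b} \<times> cube x)"
  by (auto simp: cube_def list_all2_Cons1)

lemma card_mem: "card {b. mem a b} = (if a = Joker then 2 else 1)"
proof (cases a)
  case Zero
  then have "{b. mem a b} = {Zero}" by (auto simp: mem_def)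
  then show ?thesis using Zero by simp
next
  case One
  then have "{b. mem a b} = {One}" by (auto simp: mem_def)
  then show ?thesis using One by simp
next
  case Joker
  then have "{b. mem a b} = {Zero, One}" by (auto simp: mem_def intro: sym.exhaust)
  then show ?thesis using Joker by simp
qed

lemma finite_mem: "finite {b. mem a b}"
  using finite_subset[of "{b. mem a b}" "{Zero, One, Joker}"] by (auto intro: sym.exhaust)

lemma cube_card: "finite (cube x) \<and> card (cube x) = 2 ^ jokers x"
proof (induction x)
  case Nil
  then show ?case by (simp add: cube_Nil jokers_def)
next
  case (Cons a x)
  have inj: "inj_on (\<lambda>(b,p). b # p) ({b. mem a b} \<times> cube x)" by (auto simp: inj_on_def)
  have "card (cube (a # x)) = card ({b. mem a b} \<times> cube x)"
    unfolding cube_Cons by (rule card_image[OF inj])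
  also have "\<dots> = card {b. mem a b} * card (cube x)" by (rule card_cartesian_product)
  also have "\<dots> = 2 ^ jokers (a # x)"
    using Cons by (simp add: card_mem jokers_def)
  finally show ?case using Cons finite_mem by (simp add: cube_Cons)
qed

lemma pts_cube: "pts d = cube (replicate d Joker)"
  by (auto simp: pts_nth cube_nth)

lemma card_pts: "card (pts d) = 2 ^ d"
  using cube_card[of "replicate d Joker"] by (simp add: pts_cube jokers_def)

lemma finite_pts: "finite (pts d)"
  using cube_card[of "replicate d Joker"] by (simp add: pts_cube)

lemma cube_sub_pts: "length x = d \<Longrightarrow> cube x \<subseteq> pts d"
  by (auto simp: cube_nth pts_nth)

lemma union_card:
  assumes "F \<subseteq> strings d" "neighborly k F"
  shows "card (\<Union>(cube ` F)) = (\<Sum>x\<in>F. (2::nat) ^ jokers x)"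
proof -
  have fin: "finite F" using assms finite_strings by (auto intro: finite_subset)
  have disj: "\<forall>x\<in>F. \<forall>y\<in>F. x \<noteq> y \<longrightarrow> cube x \<inter> cube y = {}"
  proof (intro ballI impI)
    fix x y assume "x \<in> F" "y \<in> F" "x \<noteq> y"
    then have "1 \<le> sdist x y" using assms by (auto simp: neighborly_def)
    then show "cube x \<inter> cube y = {}" using common_pt_sdist0 by fastforce
  qed
  have "card (\<Union>(cube ` F)) = (\<Sum>x\<in>F. card (cube x))"
    by (rule card_UN_disjoint[OF fin]) (use cube_card disj in auto)
  then show ?thesis using cube_card by simp
qed

lemma partition_good:
  assumes "is_partition d F" "neighborly k F" "k \<le> 2"
  shows "good d F"
proof -
  have sub: "F \<subseteq> strings d" using assms by (simp add: is_partition_def)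
  have "\<Union>(cube ` F) \<subseteq> pts d" using sub cube_sub_pts by (auto simp: strings_def)
  moreover have "card (\<Union>(cube ` F)) = card (pts d)"
    using union_card[OF sub assms(2)] assms(1) by (simp add: is_partition_def card_pts)
  ultimately have "\<Union>(cube ` F) = pts d" using finite_pts by (simp add: card_subset_eq)
  moreover have "neighborly 2 F" using assms(2,3) by (force simp: neighborly_def)
  ultimately show ?thesis using sub by (simp add: good_def)
qed

lemma good_partition:
  assumes "good d F"
  shows "is_partition d F"
proof -
  have sub: "F \<subseteq> strings d" using assms by (simp add: good_def)
  have "\<Union>(cube ` F) \<subseteq> pts d" using sub cube_sub_pts by (auto simp: strings_def)
  then have "\<Union>(cube ` F) = pts d" using assms by (auto simp: good_def)
  then show ?thesis using union_card[OF sub, of 2] assms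
    by (auto simp: is_partition_def good_def card_pts)
qed

definition sh :: "nat \<Rightarrow> nat \<Rightarrow> nat" where "sh t i = (if i < t then i else Suc i)"

definition ins :: "nat \<Rightarrow> sym \<Rightarrow> sym list \<Rightarrow> sym list" where
  "ins t b q = take t q @ b # drop t q"

lemma del_len[simp]: "t < length x \<Longrightarrow> length (del_at t x) = length x - 1"
  by (simp add: del_at_def)

lemma del_nth: "t < length x \<Longrightarrow> i < length x - 1 \<Longrightarrow> del_at t x ! i = x ! sh t i"
  by (auto simp: del_at_def sh_def nth_append min_def)

lemma ins_len[simp]: "t \<le> length q \<Longrightarrow> length (ins t b q) = Suc (length q)"
  by (simp add: ins_def)

lemma ins_nth: assumes "t \<le> length q" "j < Suc (length q)" shows
   "ins t b q ! j = (if j < t then q ! j else if j = t then b else q ! (j - 1))"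
proof -
  consider "j < t" | "j = t" | "t < j" by linarith
  then show ?thesis
  proof cases
    case 3
    then have "ins t b q ! j = (b # drop t q) ! (j - t)" using assms by (simp add: ins_def nth_append)
    also have "\<dots> = drop t q ! (j - t - 1)" using 3 by (simp add: nth_Cons')
    also have "\<dots> = q ! (j - 1)" using 3 assms by (simp add: nth_drop)
    finally show ?thesis using 3 by simp
  qed (use assms in \<open>auto simp: ins_def nth_append\<close>)
qed

lemma ins_sh: "t \<le> length q \<Longrightarrow> i < length q \<Longrightarrow> ins t b q ! sh t i = q ! i"
  by (auto simp: ins_nth sh_def)

lemma sh_neq[simp]: "sh t i \<noteq> t" by (simp add: sh_def)
lemma sh_inj: "sh t i = sh t j \<longleftrightarrow> i = j" by (auto simp: sh_def split: if_splits)
lemma sh_less: "i < d - 1 \<Longrightarrow> t < d \<Longrightarrow> sh t i < d" by (auto simp: sh_def)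

lemma sh_surj: assumes "j < d" "j \<noteq> t" "t < d" shows "\<exists>i < d - 1. sh t i = j"
proof (cases "j < t")
  case True
  then show ?thesis using assms by (intro exI[of _ j]) (auto simp: sh_def)
next
  case False
  then show ?thesis using assms by (intro exI[of _ "j - 1"]) (auto simp: sh_def)
qed

lemma card_sh:
  assumes "t < d"
  shows "card {i. i < d - 1 \<and> P (sh t i)} = card {j. j < d \<and> j \<noteq> t \<and> P j}"
proof -
  have "sh t ` {i. i < d - 1 \<and> P (sh t i)} = {j. j < d \<and> j \<noteq> t \<and> P j}"
  proof
    show "sh t ` {i. i < d - 1 \<and> P (sh t i)} \<subseteq> {j. j < d \<and> j \<noteq> t \<and> P j}"
      using assms sh_less by auto
    show "{j. j < d \<and> j \<noteq> t \<and> P j} \<subseteq> sh t ` {i. i < d - 1 \<and> P (sh t i)}"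
    proof
      fix j assume "j \<in> {j. j < d \<and> j \<noteq> t \<and> P j}"
      then obtain i where "i < d - 1" "sh t i = j" using sh_surj assms by blast
      then show "j \<in> sh t ` {i. i < d - 1 \<and> P (sh t i)}" using \<open>j \<in> _\<close> by auto
    qed
  qed
  moreover have "inj_on (sh t) {i. i < d - 1 \<and> P (sh t i)}" by (auto simp: inj_on_def sh_inj)
  ultimately show ?thesis by (metis card_image)
qed

definition nf :: "sym list \<Rightarrow> nat" where
  "nf x = card {i. i < length x \<and> x!i \<noteq> Joker}"

lemma nf_le: "nf x \<le> length x"
proof -
  have "nf x \<le> card {..<length x}" unfolding nf_def by (rule card_mono) auto
  then show ?thesis by simp
qed

lemma card_split_t:
  fixes t d :: nat
  assumes "t < d"
  shows "card {j. j < d \<and> P j} = card {j. j < d \<and> j \<noteq> t \<and> P j} + (if P t then 1 else 0)"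
proof (cases "P t")
  case True
  have "{j. j < d \<and> P j} = insert t {j. j < d \<and> j \<noteq> t \<and> P j}" using True assms by auto
  moreover have "finite {j. j < d \<and> j \<noteq> t \<and> P j}" by (rule finite_subset[of _ "{..<d}"]) auto
  ultimately show ?thesis using True by simp
next
  case False
  have "{j. j < d \<and> P j} = {j. j < d \<and> j \<noteq> t \<and> P j}" using False by auto
  then show ?thesis using False by simp
qed

lemma nf_del:
  assumes "t < length x"
  shows "nf x = nf (del_at t x) + (if x!t \<noteq> Joker then 1 else 0)"
proof -
  have "nf (del_at t x) = card {i. i < length x - 1 \<and> x ! sh t i \<noteq> Joker}"
    unfolding nf_def using assms by (simp add: del_nth cong: conj_cong)
  also have "\<dots> = card {j. j < length x \<and> j \<noteq> t \<and> x!j \<noteq> Joker}"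
    by (rule card_sh[OF assms])
  finally show ?thesis unfolding nf_def using card_split_t[OF assms, of "\<lambda>j. x!j \<noteq> Joker"] by simp
qed

definition CS :: "sym list \<Rightarrow> sym list \<Rightarrow> nat set" where
  "CS x y = {i. i < length x \<and> i < length y \<and> conf (x!i) (y!i)}"

lemma sdist_CS: "sdist x y = card (CS x y)" by (simp add: sdist_conf CS_def)
lemma finite_CS[simp]: "finite (CS x y)" by (rule finite_subset[of _ "{..<length x}"]) (auto simp: CS_def)

lemma conf_sym: "conf a b = conf b a" by (auto simp: conf_def)
lemma CS_sym: "CS x y = CS y x" by (auto simp: CS_def conf_sym)
lemma sdist_sym: "sdist x y = sdist y x" by (simp add: sdist_CS CS_sym)

lemma conf_irrefl[simp]: "\<not> conf a a" by (auto simp: conf_def)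

lemma sdist_del:
  assumes "t < d" "length x = d" "length y = d" "\<not> conf (x!t) (y!t)"
  shows "sdist (del_at t x) (del_at t y) = sdist x y"
proof -
  have "sdist (del_at t x) (del_at t y) = card {i. i < d - 1 \<and> conf (x ! sh t i) (y ! sh t i)}"
    unfolding sdist_conf using assms by (simp add: del_nth cong: conj_cong)
  also have "\<dots> = card {j. j < d \<and> j \<noteq> t \<and> conf (x!j) (y!j)}" by (rule card_sh[OF assms(1)])
  also have "\<dots> = card {j. j < d \<and> conf (x!j) (y!j)}"
    using card_split_t[OF assms(1), of "\<lambda>j. conf (x!j) (y!j)"] assms(4) by simp
  finally show ?thesis using assms by (simp add: sdist_conf)
qed

definition sec :: "nat \<Rightarrow> sym \<Rightarrow> sym list set \<Rightarrow> sym list set" where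
  "sec t b F = del_at t ` {y\<in>F. y!t = b \<or> y!t = Joker}"

lemma good_sec:
  assumes g: "good d F" and t: "t < d" and b: "b \<noteq> Joker"
  shows "good (d - 1) (sec t b F)"
  unfolding good_def
proof (intro conjI)
  show "sec t b F \<subseteq> strings (d - 1)"
    using good_len[OF g] t by (auto simp: sec_def strings_def)
  show "neighborly 2 (sec t b F)"
    unfolding neighborly_def
  proof (intro ballI impI)
    fix u v assume "u \<in> sec t b F" "v \<in> sec t b F" "u \<noteq> v"
    then obtain x y where xy: "x \<in> F" "y \<in> F" "x!t = b \<or> x!t = Joker" "y!t = b \<or> y!t = Joker"
      "u = del_at t x" "v = del_at t y" by (auto simp: sec_def)
    then have "x \<noteq> y" using \<open>u \<noteq> v\<close> by auto
    have "\<not> conf (x!t) (y!t)" using xy(3,4) by (auto simp: conf_def)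
    then have "sdist u v = sdist x y" using sdist_del[OF t] good_len[OF g] xy by simp
    then show "1 \<le> sdist u v \<and> sdist u v \<le> 2"
      using g xy(1,2) \<open>x \<noteq> y\<close> by (auto simp: good_def neighborly_def)
  qed
  show "pts (d - 1) \<subseteq> \<Union> (cube ` sec t b F)"
  proof
    fix q assume q: "q \<in> pts (d - 1)"
    have lq: "length q = d - 1" using q by (simp add: pts_def)
    have tl: "t \<le> length q" using t lq by simp
    have "ins t b q \<in> pts d"
      using q t b tl lq by (auto simp: pts_nth ins_nth)
    then obtain y where y: "y \<in> F" "ins t b q \<in> cube y" using g by (auto elim: good_cover)
    have ly: "length y = d" using good_len[OF g y(1)] .
    have "ins t b q ! t = b" using tl lq t by (simp add: ins_nth)
    then have yt: "y!t = b \<or> y!t = Joker"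
      using y(2) t ly unfolding cube_nth by metis
    have "\<forall>i<length (del_at t y). q ! i \<noteq> Joker \<and> (del_at t y ! i \<noteq> Joker \<longrightarrow> q ! i = del_at t y ! i)"
    proof (intro allI impI)
      fix i assume i: "i < length (del_at t y)"
      then have i': "i < length q" using ly lq t by simp
      have "sh t i < length y" using i' lq ly t sh_less by auto
      then have "ins t b q ! sh t i \<noteq> Joker \<and> (y ! sh t i \<noteq> Joker \<longrightarrow> ins t b q ! sh t i = y ! sh t i)"
        using y(2) ly by (auto simp: cube_nth)
      then show "q ! i \<noteq> Joker \<and> (del_at t y ! i \<noteq> Joker \<longrightarrow> q ! i = del_at t y ! i)"
        using ins_sh[OF tl i'] del_nth[of t y i] i' lq ly t by auto
    qed
    then have "q \<in> cube (del_at t y)" unfolding cube_nth using ly lq t by simp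
    then show "q \<in> \<Union> (cube ` sec t b F)" using y yt by (auto simp: sec_def)
  qed
qed

lemma sec_mem: "y \<in> F \<Longrightarrow> y!t = b \<or> y!t = Joker \<Longrightarrow> del_at t y \<in> sec t b F"
  by (auto simp: sec_def)

lemma lift_eq:
  assumes "length y = d" "length x = d" "t < d" "m' < d - 1"
    "del_at t y = fl {m'} (del_at t x)"
  shows "y = (fl {sh t m'} x)[t := y!t]"
proof (rule nth_equalityI)
  show "length y = length ((fl {sh t m'} x)[t := y ! t])" using assms by simp
next
  fix j assume "j < length y"
  show "y ! j = (fl {sh t m'} x)[t := y ! t] ! j"
  proof (cases "j = t")
    case True then show ?thesis using assms by simp
  next
    case False
    obtain i where i: "i < d - 1" "sh t i = j" using sh_surj[of j d t] False assms \<open>j < length y\<close> by auto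
    have "y ! j = del_at t y ! i" using del_nth[of t y i] i assms by simp
    also have "\<dots> = fl {m'} (del_at t x) ! i" using assms by simp
    also have "\<dots> = (if i = m' then neg (x ! j) else x ! j)"
      using del_nth[of t x i] i assms by (cases "i = m'") simp_all
    also have "\<dots> = fl {sh t m'} x ! j" using i(1) assms \<open>j < length y\<close> unfolding i(2)[symmetric] by (simp add: sh_inj)
    finally show ?thesis using False by simp
  qed
qed


definition pt :: "sym list \<Rightarrow> sym list" where
  "pt x = map (\<lambda>s. if s = Joker then Zero else s) x"

lemma pt_cube: "pt x \<in> cube x" by (auto simp: pt_def cube_nth)

lemma CS_upd_J: "CS (x[m := Joker]) y = CS x y - {m}"
proof (rule set_eqI)
  fix i show "i \<in> CS (x[m := Joker]) y \<longleftrightarrow> i \<in> CS x y - {m}"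
    by (cases "i = m") (auto simp: CS_def conf_def)
qed

lemma good_merge:
  assumes g: "good d F" and x: "x \<in> F" and m: "m < d" "x!m \<noteq> Joker" and fx: "fl {m} x \<in> F"
  shows "good d (insert (x[m := Joker]) (F - {x, fl {m} x}))"
    and "card (insert (x[m := Joker]) (F - {x, fl {m} x})) < card F"
proof -
  let ?z = "x[m := Joker]"
  let ?G = "insert ?z (F - {x, fl {m} x})"
  have lx: "length x = d" using good_len[OF g x] .
  have cz: "cube x \<subseteq> cube ?z" "cube (fl {m} x) \<subseteq> cube ?z"
    using lx m by (auto simp: cube_nth nth_list_update)
  have zF: "?z \<notin> F"
  proof
    assume "?z \<in> F"
    have "pt x \<in> cube ?z" using cz pt_cube by blast
    then have "?z = x" using good_uniq[OF g \<open>?z \<in> F\<close> x _ pt_cube] by simp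
    then show False using m lx by (metis nth_list_update_eq)
  qed
  have xfx: "x \<noteq> fl {m} x" using m lx by (metis fl_nth insertI1 neg_neq)
  have nb: "\<forall>v\<in>F - {x, fl {m} x}. 1 \<le> sdist ?z v \<and> sdist ?z v \<le> 2"
  proof
    fix v assume v: "v \<in> F - {x, fl {m} x}"
    have lv: "length v = d" using good_len[OF g] v by auto
    have "sdist x v \<le> 2" using good_nb[OF g x] v by auto
    moreover have "sdist ?z v \<le> sdist x v"
      unfolding sdist_CS CS_upd_J by (rule card_mono) auto
    moreover have "1 \<le> sdist ?z v"
    proof (rule ccontr)
      assume "\<not> 1 \<le> sdist ?z v"
      then have "card (CS x v - {m}) = 0" unfolding sdist_CS CS_upd_J by linarith
      then have e: "CS x v - {m} = {}" by simp
      have "1 \<le> sdist x v" using g x v by (auto simp: good_def neighborly_def)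
      moreover have "CS x v \<subseteq> {m}" using e by blast
      ultimately have "m \<in> CS x v" unfolding sdist_CS
        by (cases "m \<in> CS x v") (auto simp: subset_singleton_iff)
      then have cm: "conf (x!m) (v!m)" by (simp add: CS_def)
      have "CS (fl {m} x) v = {}"
      proof -
        have "i \<notin> CS (fl {m} x) v" for i
        proof
          assume i: "i \<in> CS (fl {m} x) v"
          show False
          proof (cases "i = m")
            case True
            then show False using i cm conf_cases[OF cm] by (auto simp: CS_def)
          next
            case False
            then have "i \<in> CS x v - {m}" using i by (auto simp: CS_def)
            then show False using e by simp
          qed
        qed
        then show ?thesis by auto
      qed
      then have "sdist (fl {m} x) v = 0" by (simp add: sdist_CS)
      moreover have "fl {m} x \<noteq> v" using v by auto
      moreover have "1 \<le> sdist (fl {m} x) v" using g fx v \<open>fl {m} x \<noteq> v\<close>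
        unfolding good_def neighborly_def by blast
      ultimately show False by simp
    qed
    ultimately show "1 \<le> sdist ?z v \<and> sdist ?z v \<le> 2" by simp
  qed
  show "good d ?G"
    unfolding good_def
  proof (intro conjI)
    show "?G \<subseteq> strings d" using g lx by (auto simp: good_def strings_def)
    show "neighborly 2 ?G"
      unfolding neighborly_def
    proof (intro ballI impI)
      fix u v assume "u \<in> ?G" "v \<in> ?G" "u \<noteq> v"
      then consider "u = ?z" "v \<in> F - {x, fl {m} x}" | "v = ?z" "u \<in> F - {x, fl {m} x}"
        | "u \<in> F" "v \<in> F" by auto
      then show "1 \<le> sdist u v \<and> sdist u v \<le> 2"
      proof cases
        case 1 then show ?thesis using nb by auto
      next
        case 2 then show ?thesis using nb sdist_sym by metis
      next
        case 3 then show ?thesis using g \<open>u \<noteq> v\<close> by (auto simp: good_def neighborly_def)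
      qed
    qed
    show "pts d \<subseteq> \<Union> (cube ` ?G)"
    proof
      fix p assume "p \<in> pts d"
      then obtain y where "y \<in> F" "p \<in> cube y" using g by (auto elim: good_cover)
      then show "p \<in> \<Union> (cube ` ?G)" using cz by (cases "y = x \<or> y = fl {m} x") auto
    qed
  qed
  have fin: "finite F" using good_finite[OF g] .
  have "card (F - {x, fl {m} x}) = card F - 2" using x fx xfx fin
    by (simp add: card_Diff_subset)
  moreover have "card F \<ge> 2" using x fx xfx fin
    by (metis card_2_iff card_mono empty_subsetI insert_subset)
  ultimately show "card ?G < card F" using zF fin by simp
qed

abbreviation AJ :: "nat \<Rightarrow> sym list" where "AJ d \<equiv> replicate d Joker"

lemma pts_AJ: "cube (AJ d) = pts d" by (simp add: pts_cube)

lemma pt_pts: "length x = d \<Longrightarrow> pt x \<in> pts d"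
  by (auto simp: pt_def pts_def)

lemma good_AJ: assumes "good d F" "AJ d \<in> F" shows "F = {AJ d}"
proof -
  have "y = AJ d" if "y \<in> F" for y
  proof -
    have "pt y \<in> cube (AJ d)" using pt_pts[OF good_len[OF assms(1) that]] pts_AJ by simp
    then show ?thesis using good_uniq[OF assms(1) that assms(2) pt_cube] by simp
  qed
  then show ?thesis using assms(2) by blast
qed

lemma good_nonempty: "good d F \<Longrightarrow> F \<noteq> {}"
proof
  assume "good d F" "F = {}"
  have "replicate d Zero \<in> pts d" by (simp add: pts_def)
  then show False using \<open>good d F\<close> \<open>F = {}\<close> by (auto simp: good_def)
qed

lemma fixed_pt_notin:
  assumes "length x = d" "i < d" "x!i \<noteq> Joker"
  shows "fl {i} (pt x) \<in> pts d" "fl {i} (pt x) \<notin> cube x"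
proof -
  show "fl {i} (pt x) \<in> pts d" using assms by (auto simp: pts_nth pt_def)
  have "fl {i} (pt x) ! i = neg (x!i)" using assms by (simp add: pt_def)
  moreover have "neg (x!i) \<noteq> x!i" using assms by simp
  ultimately show "fl {i} (pt x) \<notin> cube x" using assms unfolding cube_nth by metis
qed

lemma good_single: assumes "good d F" "F = {x}" shows "x = AJ d"
proof -
  have lx: "length x = d" using good_len[OF assms(1)] assms(2) by simp
  have "x!i = Joker" if "i < d" for i
  proof (rule ccontr)
    assume "x!i \<noteq> Joker"
    then have "fl {i} (pt x) \<in> pts d" "fl {i} (pt x) \<notin> cube x" using fixed_pt_notin lx that by auto
    then show False using assms by (auto simp: good_def)
  qed
  then show ?thesis using lx by (simp add: list_eq_iff_nth_eq)
qed

lemma good_max: assumes "good d F" obtains x where "x \<in> F" "\<forall>y\<in>F. nf y \<le> nf x"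
proof -
  have fin: "finite (nf ` F)" using good_finite[OF assms] by simp
  have ne: "nf ` F \<noteq> {}" using good_nonempty[OF assms] by simp
  obtain x where "x \<in> F" "nf x = Max (nf ` F)" using Max_in[OF fin ne] by auto
  then show ?thesis using that Max_ge[OF fin] by auto
qed

definition H1 :: "nat \<Rightarrow> bool" where
  "H1 d \<longleftrightarrow> (\<forall>F x. good d F \<longrightarrow> x \<in> F \<longrightarrow> (\<forall>y\<in>F. nf y \<le> nf x) \<longrightarrow> x \<noteq> AJ d \<longrightarrow>
      (\<exists>m<d. x!m \<noteq> Joker \<and> fl {m} x \<in> F))"

definition LAM :: "nat \<Rightarrow> bool" where
  "LAM d \<longleftrightarrow> (\<forall>F. good d F \<longrightarrow> F \<noteq> {AJ d} \<longrightarrow> (\<exists>c<d. \<forall>y\<in>F. y!c \<noteq> Joker))"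

lemma H1_LAM: assumes h: "H1 d" shows "LAM d"
  unfolding LAM_def
proof (intro allI impI)
  fix F assume "good d F" "F \<noteq> {AJ d}"
  then show "\<exists>c<d. \<forall>y\<in>F. y!c \<noteq> Joker"
  proof (induction "card F" arbitrary: F rule: less_induct)
    case less
    obtain x where x: "x \<in> F" "\<forall>y\<in>F. nf y \<le> nf x" using good_max[OF less(2)] by blast
    have "x \<noteq> AJ d" using good_AJ[OF less(2)] x less(3) by auto
    then obtain m where m: "m < d" "x!m \<noteq> Joker" "fl {m} x \<in> F"
      using h less(2) x unfolding H1_def by blast
    let ?z = "x[m := Joker]"
    let ?G = "insert ?z (F - {x, fl {m} x})"
    have gG: "good d ?G" and cG: "card ?G < card F" using good_merge[OF less(2) x(1) m] by auto
    have lx: "length x = d" using good_len[OF less(2) x(1)] .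
    show ?case
    proof (cases "?G = {AJ d}")
      case True
      then have "F - {x, fl {m} x} \<subseteq> {AJ d}" by auto
      moreover have "AJ d \<notin> F" using good_AJ[OF less(2)] less(3) by auto
      ultimately have "F \<subseteq> {x, fl {m} x}" by auto
      moreover have "(fl {m} x) ! m \<noteq> Joker" using m lx by simp
      ultimately show ?thesis using m by auto
    next
      case False
      then obtain c where c: "c < d" "\<forall>y\<in>?G. y!c \<noteq> Joker" using less(1)[OF cG gG] by blast
      have "c \<noteq> m" using c(2) m lx by auto
      have "y!c \<noteq> Joker" if "y \<in> F" for y
      proof (cases "y = x \<or> y = fl {m} x")
        case True
        have "?z ! c \<noteq> Joker" using c by auto
        then show ?thesis using True \<open>c \<noteq> m\<close> lx c(1) by auto
      next
        case False then show ?thesis using c that by auto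
      qed
      then show ?thesis using c(1) by blast
    qed
  qed
qed

lemma points_full:
  assumes g: "good d F" and np: "\<forall>y\<in>F. \<forall>i<d. y!i \<noteq> Joker"
  shows "F = {x. length x = d \<and> set x \<subseteq> {Zero, One}}"
proof
  show "F \<subseteq> {x. length x = d \<and> set x \<subseteq> {Zero, One}}"
  proof
    fix y assume y: "y \<in> F"
    have "length y = d" using good_len[OF g y] .
    moreover have "set y \<subseteq> {Zero, One}"
    proof
      fix s assume "s \<in> set y"
      then obtain i where "i < length y" "y!i = s" by (auto simp: in_set_conv_nth)
      then show "s \<in> {Zero, One}" using np y \<open>length y = d\<close> by (cases s) auto
    qed
    ultimately show "y \<in> {x. length x = d \<and> set x \<subseteq> {Zero, One}}" by simp
  qed
  show "{x. length x = d \<and> set x \<subseteq> {Zero, One}} \<subseteq> F"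
  proof
    fix p assume "p \<in> {x. length x = d \<and> set x \<subseteq> {Zero, One}}"
    then have "p \<in> pts d" by (auto simp: pts_def)
    then obtain y where y: "y \<in> F" "p \<in> cube y" using g by (auto elim: good_cover)
    have "p = y" using y np good_len[OF g y(1)] by (auto simp: cube_nth list_eq_iff_nth_eq)
    then show "p \<in> F" using y by simp
  qed
qed

lemma TL:
  assumes all: "\<And>n. LAM n"
  shows "1 \<le> d \<Longrightarrow> good d F \<Longrightarrow> total_lamination d F"
proof (induction d arbitrary: F)
  case 0 then show ?case by simp
next
  case (Suc n)
  show ?case
  proof (cases "F = {AJ (Suc n)}")
    case True then show ?thesis using total_lamination.all_joker[of "Suc n"] by simp
  next
    case False
    then obtain c where c: "c < Suc n" "\<forall>y\<in>F. y!c \<noteq> Joker" using all Suc.prems unfolding LAM_def by blast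
    show ?thesis
    proof (cases "n = 0")
      case True
      then have "\<forall>y\<in>F. \<forall>i<Suc n. y!i \<noteq> Joker" using c by auto
      then have "F = {x. length x = Suc n \<and> set x \<subseteq> {Zero, One}}" using points_full Suc.prems by blast
      then show ?thesis using total_lamination.full_cube[of "Suc n"] by simp
    next
      case False
      have vals: "y!c = Zero \<or> y!c = One" if "y \<in> F" for y using c that by (cases "y!c") auto
      have split: "F = fam_at F c Zero \<union> fam_at F c One" using vals by (auto simp: fam_at_def)
      have "is_lamination (Suc n) F" unfolding is_lamination_def
        using good_partition[OF Suc.prems(2)] split c(1) by blast
      moreover have "total_lamination n (del_fam c (fam_at F c b))" if "b \<noteq> Joker" for b
      proof -
        have "del_fam c (fam_at F c b) = sec c b F" using c(2)
          by (auto simp: del_fam_def fam_at_def sec_def)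
        moreover have "good n (sec c b F)" using good_sec[OF Suc.prems(2) c(1) that] by simp
        ultimately show ?thesis using Suc.IH False by simp
      qed
      ultimately show ?thesis using total_lamination.split[OF _ c(1) split] by simp
    qed
  qed
qed

lemma nf_fl: "nf (fl S x) = nf x"
  unfolding nf_def by (rule arg_cong[where f=card]) (auto split: if_splits)

lemma neg_J2[simp]: "(Joker = neg v) = (v = Joker)" by (cases v) auto

lemma nf_point: "\<forall>i<length x. x!i \<noteq> Joker \<Longrightarrow> nf x = length x"
proof -
  assume "\<forall>i<length x. x!i \<noteq> Joker"
  then have "{i. i < length x \<and> x!i \<noteq> Joker} = {..<length x}" by auto
  then show ?thesis by (simp add: nf_def)
qed

lemma flcube:
  assumes "length x = d" "\<forall>i<d. x!i \<noteq> Joker" "length y = d"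
  shows "fl S x \<in> cube y \<longleftrightarrow> (\<forall>i<d. y!i \<noteq> Joker \<longrightarrow> y!i = (if i \<in> S then neg (x!i) else x!i))"
  using assms by (auto simp: cube_nth)

lemma fl_pts: "length x = d \<Longrightarrow> \<forall>i<d. x!i \<noteq> Joker \<Longrightarrow> fl S x \<in> pts d"
  by (auto simp: pts_nth)

lemma del_AJ: "t < length x \<Longrightarrow> i < length x - 1 \<Longrightarrow> del_at t x ! i \<noteq> Joker \<Longrightarrow> del_at t x \<noteq> AJ (length x - 1)"
  by auto

lemma H1_step:
  assumes IH: "\<And>d'. d' < d \<Longrightarrow> H1 d'"
  shows "H1 d"
  unfolding H1_def
proof (intro allI impI)
  fix F x
  assume g: "good d F" and x: "x \<in> F" and mx: "\<forall>y\<in>F. nf y \<le> nf x" and xAJ: "x \<noteq> AJ d"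
  have lx: "length x = d" using good_len[OF g x] .
  show "\<exists>m<d. x!m \<noteq> Joker \<and> fl {m} x \<in> F"
  proof (cases "\<exists>t<d. x!t = Joker")
    case True
    then obtain t where t: "t < d" "x!t = Joker" by blast
    let ?S = "sec t Zero F"
    let ?x' = "del_at t x"
    have gS: "good (d - 1) ?S" using good_sec[OF g t(1)] by simp
    have x'S: "?x' \<in> ?S" using sec_mem[OF x] t by simp
    have nfx: "nf x = nf ?x'" using nf_del[of t x] t lx by simp
    have mS: "\<forall>u\<in>?S. nf u \<le> nf ?x'"
    proof
      fix u assume "u \<in> ?S"
      then obtain y where y: "y \<in> F" "u = del_at t y" by (auto simp: sec_def)
      have "nf y = nf u + (if y!t \<noteq> Joker then 1 else 0)"
        using nf_del[of t y] y t good_len[OF g y(1)] by simp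
      then show "nf u \<le> nf ?x'" using mx y(1) nfx by fastforce
    qed
    obtain j where j: "j < d" "x!j \<noteq> Joker"
      using xAJ lx by (metis list_eq_iff_nth_eq length_replicate nth_replicate)
    have "j \<noteq> t" using j t by auto
    then obtain i where i: "i < d - 1" "sh t i = j" using sh_surj j t by blast
    have "?x' ! i = x ! j" using del_nth[of t x i] i lx t by simp
    then have x'AJ: "?x' \<noteq> AJ (d - 1)" using i j by auto
    have "H1 (d - 1)" using IH t by simp
    then obtain m' where m': "m' < d - 1" "?x' ! m' \<noteq> Joker" "fl {m'} ?x' \<in> ?S"
      using gS x'S mS x'AJ unfolding H1_def by blast
    then obtain y where y: "y \<in> F" "y!t = Zero \<or> y!t = Joker" "del_at t y = fl {m'} ?x'"
      by (auto simp: sec_def)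
    have ly: "length y = d" using good_len[OF g y(1)] .
    have "y!t = Joker"
    proof (rule ccontr)
      assume "y!t \<noteq> Joker"
      then have "nf y = nf (del_at t y) + 1" using nf_del[of t y] t ly by simp
      also have "\<dots> = nf x + 1" using y(3) nf_fl nfx by simp
      finally show False using mx y(1) by fastforce
    qed
    have yeq: "y = (fl {sh t m'} x)[t := y!t]" using lift_eq[OF ly lx t(1) m'(1) y(3)] .
    have "fl {sh t m'} x ! t = Joker" using t lx by simp
    then have "y = fl {sh t m'} x" using yeq \<open>y!t = Joker\<close> by (metis list_update_id)
    moreover have "x ! sh t m' \<noteq> Joker" using del_nth[of t x m'] m' lx t by simp
    moreover have "sh t m' < d" using sh_less m'(1) t(1) by simp
    ultimately show ?thesis using y(1) by blast
  next
    case False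
    then have xp: "\<forall>t<d. x!t \<noteq> Joker" by simp
    show ?thesis
    proof (rule ccontr)
      assume "\<not> ?thesis"
      then have nt: "\<forall>m<d. fl {m} x \<notin> F" using xp by blast
      have d0: "d \<noteq> 0" using xAJ lx by auto
      have fc: "\<And>S y. y \<in> F \<Longrightarrow> fl S x \<in> cube y \<longleftrightarrow>
          (\<forall>i<d. y!i \<noteq> Joker \<longrightarrow> y!i = (if i \<in> S then neg (x!i) else x!i))"
        using flcube[OF lx xp] good_len[OF g] by blast
      have cov: "\<And>S. \<exists>y\<in>F. fl S x \<in> cube y"
        using fl_pts[OF lx xp] g by (meson good_cover)
      have sub: "\<And>S1 S2 R. R \<in> F \<Longrightarrow> fl S1 x \<in> cube R \<Longrightarrow> (\<forall>i<d. R!i \<noteq> Joker \<longrightarrow> (i \<in> S1 \<longleftrightarrow> i \<in> S2))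
          \<Longrightarrow> fl S2 x \<in> cube R"
        using fc by simp
      have uq: "\<And>y1 y2 S. y1 \<in> F \<Longrightarrow> y2 \<in> F \<Longrightarrow> fl S x \<in> cube y1 \<Longrightarrow> fl S x \<in> cube y2 \<Longrightarrow> y1 = y2"
        using good_uniq[OF g] by blast
      show False
      proof (cases "d = 1")
        case True
        obtain y where y: "y \<in> F" "fl {0} x \<in> cube y" using cov by blast
        have ly: "length y = 1" using good_len[OF g y(1)] True by simp
        have "y!0 \<noteq> Joker"
        proof
          assume "y!0 = Joker"
          then have "fl {} x \<in> cube y" using fc[OF y(1)] True by auto
          moreover have "fl {} x \<in> cube x" using fc[OF x] by auto
          ultimately have "y = x" using uq y(1) x by blast
          then show False using \<open>y!0 = Joker\<close> xp True by auto
        qed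
        then have "y = fl {0} x" using fc[OF y(1)] y(2) ly lx True
          by (auto simp: list_eq_iff_nth_eq)
        then show False using nt y(1) True by auto
      next
        case False
        then have d2: "d \<ge> 2" using d0 by simp
        have Zt: "\<exists>m. m < d \<and> m \<noteq> t \<and> (fl {m} x)[t := Joker] \<in> F" if t: "t < d" for t
        proof -
          let ?S = "sec t (x!t) F"
          let ?x' = "del_at t x"
          have gS: "good (d - 1) ?S" using good_sec[OF g t] xp t by simp
          have x'S: "?x' \<in> ?S" using sec_mem[OF x] by simp
          have nfx': "nf ?x' = d - 1" using nf_del[of t x] t lx xp nf_point[of x] by simp
          have mS: "\<forall>u\<in>?S. nf u \<le> nf ?x'"
            using nf_le good_len[OF gS] nfx' by metis
          have "?x' ! 0 = x ! sh t 0" using del_nth[of t x 0] lx t d2 by simp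
          then have x'AJ: "?x' \<noteq> AJ (d - 1)" using xp t d2 sh_less[of 0 d t] by auto
          have "H1 (d - 1)" using IH d0 by simp
          then obtain m' where m': "m' < d - 1" "fl {m'} ?x' \<in> ?S"
            using gS x'S mS x'AJ unfolding H1_def by blast
          then obtain y where y: "y \<in> F" "y!t = x!t \<or> y!t = Joker" "del_at t y = fl {m'} ?x'"
            by (auto simp: sec_def)
          have ly: "length y = d" using good_len[OF g y(1)] .
          have yeq: "y = (fl {sh t m'} x)[t := y!t]" using lift_eq[OF ly lx t m'(1) y(3)] .
          have sm: "sh t m' < d" "sh t m' \<noteq> t" using sh_less m'(1) t by auto
          have "y!t = Joker"
          proof (rule ccontr)
            assume "y!t \<noteq> Joker"
            then have "y!t = x!t" using y(2) by simp
            then have "y = fl {sh t m'} x" using yeq sm t lx by (metis fl_nth list_update_id singletonD)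
            then show False using nt y(1) sm by auto
          qed
          then show ?thesis using yeq y(1) sm by metis
        qed
        have "\<forall>t. \<exists>m. t < d \<longrightarrow> m < d \<and> m \<noteq> t \<and> (fl {m} x)[t := Joker] \<in> F" using Zt by blast
        then obtain M where M: "\<And>t. t < d \<Longrightarrow> M t < d \<and> M t \<noteq> t \<and> (fl {M t} x)[t := Joker] \<in> F"
          by metis
        define z where "z t = (fl {M t} x)[t := Joker]" for t
        have zF: "z t \<in> F" if "t < d" for t using M[OF that] by (simp add: z_def)
        have zn: "z t ! i = (if i = t then Joker else if i = M t then neg (x!i) else x!i)"
          if "t < d" "i < d" for t i using that lx by (simp add: z_def)
        have no2: False if "a < d" "b < d" "M a = b" "M b = a" for a b
        proof -
          have ab: "a \<noteq> b" using M[OF that(1)] that by auto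
          have "fl {a, b} x \<in> cube (z a)" using fc[OF zF[OF that(1)]] zn that by auto
          moreover have "fl {a, b} x \<in> cube (z b)" using fc[OF zF[OF that(2)]] zn that by auto
          ultimately have "z a = z b" using uq zF that by blast
          then have "z a ! a = z b ! a" by simp
          then show False using zn that ab xp by auto
        qed
        show False
        proof (cases "d = 2")
          case True
          have "M 0 = 1" "M 1 = 0" using M[of 0] M[of 1] True by auto
          then show False using no2[of 0 1] True by auto
        next
          case False
          then have d3: "d \<ge> 3" using d2 by simp
          obtain w where w: "w \<in> F" "fl {..<d} x \<in> cube w" using cov by blast
          have lw: "length w = d" using good_len[OF g w(1)] .
          have wv: "\<And>i. i < d \<Longrightarrow> w!i \<noteq> Joker \<Longrightarrow> w!i = neg (x!i)" using fc[OF w(1)] w(2) by auto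
          have "w \<noteq> x"
          proof
            assume "w = x"
            then have "x!0 = neg (x!0)" using wv[of 0] xp d3 by auto
            then show False using xp d3 by (metis neg_neq gr0I not_numeral_le_zero)
          qed
          then have sw: "sdist x w \<le> 2" using good_nb[OF g x w(1)] by simp
          define Dw where "Dw = {i. i < d \<and> w!i \<noteq> Joker}"
          have "Dw \<subseteq> CS x w"
          proof
            fix i assume "i \<in> Dw"
            then have i: "i < d" "w!i \<noteq> Joker" by (auto simp: Dw_def)
            then have "w!i = neg (x!i)" by (rule wv)
            then show "i \<in> CS x w" using i xp lx lw conf_neg[of "x!i"] by (simp add: CS_def)
          qed
          then have cDw: "card Dw \<le> 2" using sw card_mono[OF finite_CS] by (metis sdist_CS order_trans)
          have finDw: "finite Dw" by (simp add: Dw_def)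
          have Lt: "\<exists>c. c < d \<and> c \<noteq> t \<and> (\<forall>y\<in>F. (y!t = x!t \<or> y!t = Joker) \<longrightarrow> y!c \<noteq> Joker)"
            if t: "t < d" for t
          proof -
            let ?S = "sec t (x!t) F"
            let ?x' = "del_at t x"
            have gS: "good (d - 1) ?S" using good_sec[OF g t] xp t by simp
            have x'S: "?x' \<in> ?S" using sec_mem[OF x] by simp
            have "?x' ! 0 = x ! sh t 0" using del_nth[of t x 0] lx t d2 by simp
            then have x'AJ: "?x' \<noteq> AJ (d - 1)" using xp t d2 sh_less[of 0 d t] by auto
            then have "?S \<noteq> {AJ (d - 1)}" using x'S by auto
            moreover have "LAM (d - 1)" using IH d0 H1_LAM by simp
            ultimately obtain c' where c': "c' < d - 1" "\<forall>u\<in>?S. u!c' \<noteq> Joker"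
              using gS unfolding LAM_def by blast
            have "\<forall>y\<in>F. (y!t = x!t \<or> y!t = Joker) \<longrightarrow> y!(sh t c') \<noteq> Joker"
            proof (intro ballI impI)
              fix y assume "y \<in> F" "y!t = x!t \<or> y!t = Joker"
              then have "del_at t y \<in> ?S" by (rule sec_mem)
              then have "del_at t y ! c' \<noteq> Joker" using c' by blast
              then show "y!(sh t c') \<noteq> Joker" using del_nth[of t y c'] c' t good_len[OF g \<open>y \<in> F\<close>] by simp
            qed
            then show ?thesis using sh_less[OF c'(1) t] by auto
          qed
          have "\<forall>t. \<exists>c. t < d \<longrightarrow> c < d \<and> c \<noteq> t \<and> (\<forall>y\<in>F. (y!t = x!t \<or> y!t = Joker) \<longrightarrow> y!c \<noteq> Joker)"
            using Lt by blast
          then obtain C where C: "\<And>t. t < d \<Longrightarrow> C t < d \<and> C t \<noteq> t \<and> (\<forall>y\<in>F. (y!t = x!t \<or> y!t = Joker) \<longrightarrow> y!(C t) \<noteq> Joker)"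
            by metis
          have MC: "M (C t) = t" if "t < d" for t
          proof (rule ccontr)
            assume ne: "M (C t) \<noteq> t"
            have Ct: "C t < d" "C t \<noteq> t" using C[OF that] by auto
            have "z (C t) ! t = x ! t" using zn[OF Ct(1) that] ne Ct by auto
            then have "z (C t) ! (C t) \<noteq> Joker" using C[OF that] zF[OF Ct(1)] by blast
            then show False using zn[OF Ct(1) Ct(1)] by simp
          qed
          have Cinj: "inj_on C {..<d}" by (rule inj_onI) (metis MC lessThan_iff)
          have Csurj: "C ` {..<d} = {..<d}"
            by (rule endo_inj_surj) (use C Cinj in auto)
          have Minj: "a = b" if "a < d" "b < d" "M a = M b" for a b
          proof -
            have "a \<in> C ` {..<d}" "b \<in> C ` {..<d}" using Csurj that by auto
            then obtain a' b' where a': "a' < d" "a = C a'" and b': "b' < d" "b = C b'" by blast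
            have "a' = M a" "b' = M b" using MC a' b' by auto
            then have "a' = b'" using that(3) by simp
            then show ?thesis using a' b' by simp
          qed
          have W1: "w!(C s) \<noteq> Joker" if "s < d" "w!s = Joker" for s using C[OF that(1)] w(1) that(2) by blast
          have W2: "w!(M s) \<noteq> Joker" if "s < d" "w!s = Joker" for s
          proof
            assume "w!(M s) = Joker"
            have Ms: "M s < d" using M[OF that(1)] by simp
            then have "w!(C (M s)) \<noteq> Joker" using W1 \<open>w!(M s) = Joker\<close> by blast
            moreover have "C (M s) = s" using Minj[of "C (M s)" s] MC[OF Ms] C[OF Ms] that(1) by auto
            ultimately show False using that(2) by simp
          qed
          obtain t where t: "t < d" "w!t = Joker"
          proof -
            have "\<not> {..<d} \<subseteq> Dw"
            proof
              assume "{..<d} \<subseteq> Dw"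
              then have "card {..<d} \<le> card Dw" using finDw by (rule card_mono[rotated])
              then show False using cDw d3 by simp
            qed
            then show ?thesis using that by (auto simp: Dw_def)
          qed
          define a where "a = C t"
          define b where "b = M t"
          have ab: "a < d" "b < d" "a \<noteq> t" "b \<noteq> t" "M a = t" using C[OF t(1)] M[OF t(1)] MC[OF t(1)]
            by (auto simp: a_def b_def)
          have wab: "w!a \<noteq> Joker" "w!b \<noteq> Joker" using W1[OF t] W2[OF t] by (auto simp: a_def b_def)
          have anb: "a \<noteq> b" using no2[of a t] ab t(1) by (auto simp: b_def)
          have WD: "i = a \<or> i = b" if "i < d" "w!i \<noteq> Joker" for i
          proof (rule ccontr)
            assume "\<not> (i = a \<or> i = b)"
            then have "{a, b, i} \<subseteq> Dw" "card {a, b, i} = 3" using that wab ab anb by (auto simp: Dw_def)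
            then show False using cDw card_mono[OF finDw] by (metis not_less_eq_eq numeral_3_eq_3 numeral_2_eq_2 order_trans)
          qed
          have TR: "R!u \<noteq> Joker \<and> R!s \<noteq> Joker \<and> R!v = Joker"
            if "u < d" "v < d" "s < d" "M u = v" "M v = s" "u \<noteq> v" "v \<noteq> s" "u \<noteq> s"
               "R \<in> F" "fl {u, v, s} x \<in> cube R" for u v s R
          proof -
            have Rf: "\<And>i. i < d \<Longrightarrow> R!i \<noteq> Joker \<Longrightarrow> R!i = (if i \<in> {u, v, s} then neg (x!i) else x!i)"
              using fc[OF that(9)] that(10) by blast
            have Ru: "R!u \<noteq> Joker"
            proof
              assume J: "R!u = Joker"
              have "fl {v, s} x \<in> cube R" using sub[OF that(9,10)] J by auto
              moreover have "fl {v, s} x \<in> cube (z v)" using fc[OF zF[OF that(2)]] zn[OF that(2)] that by auto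
              ultimately have "R = z v" using uq that(9) zF[OF that(2)] by blast
              then have "R!u = x!u" using zn[OF that(2) that(1)] that by auto
              then show False using J xp that(1) by (metis)
            qed
            have Rs: "R!s \<noteq> Joker"
            proof
              assume J: "R!s = Joker"
              have "fl {u, v} x \<in> cube R" using sub[OF that(9,10)] J by auto
              moreover have "fl {u, v} x \<in> cube (z u)" using fc[OF zF[OF that(1)]] zn[OF that(1)] that by auto
              ultimately have "R = z u" using uq that(9) zF[OF that(1)] by blast
              then have "R!s = x!s" using zn[OF that(1) that(3)] that by auto
              then show False using J xp that(3) by (metis)
            qed
            have Rv: "R!v = Joker"
            proof (rule ccontr)
              assume Jv: "R!v \<noteq> Joker"
              have lR: "length R = d" using good_len[OF g that(9)] .
              have "{u, v, s} \<subseteq> CS x R"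
                using Rf[OF that(1) Ru] Rf[OF that(2) Jv] Rf[OF that(3) Rs] xp that lx lR
                by (auto simp: CS_def conf_neg)
              then have "3 \<le> sdist x R" unfolding sdist_CS using that(6,7,8)
                by (metis card_3_iff card_mono finite_CS)
              moreover have "R \<noteq> x" using Rf[OF that(1) Ru] Ru xp that(1) by (metis insertI1 neg_neq)
              ultimately show False using good_nb[OF g x that(9)] by simp
            qed
            show ?thesis using Ru Rs Rv by simp
          qed
          show False
          proof (cases "M b = a")
            case True
            obtain R where R: "R \<in> F" "fl {a, t, b} x \<in> cube R" using cov by blast
            have tr: "R!a \<noteq> Joker \<and> R!b \<noteq> Joker \<and> R!t = Joker"
              using TR[OF ab(1) t(1) ab(2) ab(5) _ _ _ _ R] ab anb by (simp add: b_def)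
            have Rf: "\<And>i. i < d \<Longrightarrow> R!i \<noteq> Joker \<Longrightarrow> R!i = (if i \<in> {a, t, b} then neg (x!i) else x!i)"
              using fc[OF R(1)] R(2) by blast
            have "fl {a, b} x \<in> cube R" using sub[OF R] tr by auto
            moreover have "fl {a, b} x \<in> cube (z b)" using fc[OF zF[OF ab(2)]] zn[OF ab(2)] True anb by auto
            ultimately have "R = z b" using uq R(1) zF[OF ab(2)] by blast
            then have "R!t = x!t" using zn[OF ab(2) t(1)] ab True anb by auto
            then show False using tr xp t(1) by (metis)
          next
            case False
            define t' where "t' = M b"
            have t': "t' < d" "t' \<noteq> b" "t' \<noteq> a" using M[OF ab(2)] False by (auto simp: t'_def)
            have "t' \<noteq> t" using Minj[OF ab(1,2)] ab(5) anb by (auto simp: t'_def b_def)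
            have wt': "w!t' = Joker" using WD[OF t'(1)] t' by auto
            have "M t' = a"
            proof -
              have Mt'd: "M t' < d" using M[OF t'(1)] by simp
              have "M t' = a \<or> M t' = b" using WD[OF Mt'd W2[OF t'(1) wt']] .
              moreover have "M t' \<noteq> b" using Minj[OF t'(1) t(1)] \<open>t' \<noteq> t\<close> by (auto simp: b_def)
              ultimately show ?thesis by simp
            qed
            obtain R3 where R3: "R3 \<in> F" "fl {t, b, t'} x \<in> cube R3" using cov by blast
            obtain R4 where R4: "R4 \<in> F" "fl {t', a, t} x \<in> cube R4" using cov by blast
            have tr3: "R3!t \<noteq> Joker \<and> R3!t' \<noteq> Joker \<and> R3!b = Joker"
              using TR[OF t(1) ab(2) t'(1) b_def[symmetric] t'_def[symmetric] ab(4)[symmetric] t'(2)[symmetric] \<open>t' \<noteq> t\<close>[symmetric] R3] .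
            have tr4: "R4!t' \<noteq> Joker \<and> R4!t \<noteq> Joker \<and> R4!a = Joker"
              using TR[OF t'(1) ab(1) t(1) \<open>M t' = a\<close> ab(5) t'(3) ab(3) \<open>t' \<noteq> t\<close> R4] .
            have Rf3: "\<And>i. i < d \<Longrightarrow> R3!i \<noteq> Joker \<Longrightarrow> R3!i = (if i \<in> {t, b, t'} then neg (x!i) else x!i)"
              using fc[OF R3(1)] R3(2) by blast
            have Rf4: "\<And>i. i < d \<Longrightarrow> R4!i \<noteq> Joker \<Longrightarrow> R4!i = (if i \<in> {t', a, t} then neg (x!i) else x!i)"
              using fc[OF R4(1)] R4(2) by blast
            have "fl {t, t'} x \<in> cube R3" using sub[OF R3] tr3 by auto
            moreover have "fl {t, t'} x \<in> cube R4" using sub[OF R4] tr4 by auto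
            ultimately have "R3 = R4" using uq R3(1) R4(1) by blast
            then have R3a: "R3!a = Joker" using tr4 by simp
            have "\<forall>i<d. R3!i \<noteq> Joker \<longrightarrow> (i \<in> {t, b, t'} \<longleftrightarrow> i \<in> {a, b, t, t'})"
            proof (intro allI impI)
              fix i assume "i < d" "R3!i \<noteq> Joker"
              then have "i \<noteq> a" "i \<noteq> b" using R3a tr3 by auto
              then show "i \<in> {t, b, t'} \<longleftrightarrow> i \<in> {a, b, t, t'}" by simp
            qed
            then have "fl {a, b, t, t'} x \<in> cube R3" using sub[OF R3] by blast
            moreover have "\<forall>i<d. w!i \<noteq> Joker \<longrightarrow> w!i = (if i \<in> {a, b, t, t'} then neg (x!i) else x!i)"
            proof (intro allI impI)
              fix i assume "i < d" "w!i \<noteq> Joker"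
              then have "i = a \<or> i = b" "w!i = neg (x!i)" using WD wv by auto
              then show "w!i = (if i \<in> {a, b, t, t'} then neg (x!i) else x!i)" by auto
            qed
            then have "fl {a, b, t, t'} x \<in> cube w" using fc[OF w(1)] by blast
            ultimately have "R3 = w" using uq R3(1) w(1) by blast
            then show False using tr3 t(2) by simp
          qed
        qed
      qed
    qed
  qed
qed

lemma H1_all: "H1 d"
proof (induction d rule: less_induct)
  case (less d)
  then show ?case by (rule H1_step)
qed

theorem corollary3:
  fixes d k :: nat and F :: "sym list set"
  assumes "d \<ge> 1"
    and "is_partition d F"
    and "k \<le> 2"
    and "neighborly k F"
  shows "total_lamination d F"
proof -
  have g: "good d F" using partition_good[OF assms(2) assms(4) assms(3)] .
  have "\<And>n. LAM n" using H1_all H1_LAM by blast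
  then show ?thesis using TL assms(1) g by blast
qed

end
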